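(* Let $m\ge1$ and $A=(a_0,\ldots,a_m)$ real with $a_0,a_m\ne0$. Suppose $\omega\in\mathbb{C}$ satisfies $P_A(\omega)=0$ and $|\omega|>1$. Then for every $\varepsilon>0$ there exists $n_0$ such that for every $n>n_0$ the polynomial $T_{n,A}$ has a (complex) root $\xi$ with $\left|\xi-\tfrac12(\omega+\omega^{-1})\right|<\varepsilon$.
   Context: $T_k$ denotes the Chebyshev polynomial of the first kind, $T_k(\cos\theta)=\cos k\theta$. For $A=(a_0,\ldots,a_m)$ real with $a_0,a_m\ne0$ and $n\ge m$, $T_{n,A}(x)=\sum_{i=0}^m a_iT_{n-i}(x)$ and $P_A(x)=\sum_{i=0}^m a_ix^{m-i}$. *)

theory Defs
  imports "HOL-Analysis.Analysis" "HOL-Computational_Algebra.Polynomial"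
begin

fun cheb_T :: "nat \<Rightarrow> real poly" where
  "cheb_T 0 = 1"
| "cheb_T (Suc 0) = [:0, 1:]"
| "cheb_T (Suc (Suc k)) = [:0, 2:] * cheb_T (Suc k) - cheb_T k"

definition T_nA :: "nat \<Rightarrow> nat \<Rightarrow> (nat \<Rightarrow> real) \<Rightarrow> real poly" where
  "T_nA n m a = (\<Sum>i\<le>m. smult (a i) (cheb_T (n - i)))"

definition P_A :: "nat \<Rightarrow> (nat \<Rightarrow> real) \<Rightarrow> real poly" where
  "P_A m a = (\<Sum>i\<le>m. monom (a i) (m - i))"

end

theory Submission
  imports Defs "HOL-Analysis.Analysis"
begin


abbreviation cpoly :: "real poly \<Rightarrow> complex poly" where
  "cpoly p \<equiv> map_poly complex_of_real p"

lemma cpoly_add: "cpoly (p + q) = cpoly p + cpoly q"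
  by (rule poly_eqI) (simp add: coeff_map_poly)

lemma cpoly_diff: "cpoly (p - q) = cpoly p - cpoly q"
  by (rule poly_eqI) (simp add: coeff_map_poly)

lemma cpoly_mult: "cpoly (p * q) = cpoly p * cpoly q"
  by (rule poly_eqI) (simp add: coeff_map_poly coeff_mult)

lemma cpoly_smult: "cpoly (smult c p) = smult (of_real c) (cpoly p)"
  by (rule poly_eqI) (simp add: coeff_map_poly)

lemma cpoly_sum: "cpoly (\<Sum>i\<in>I. f i) = (\<Sum>i\<in>I. cpoly (f i))"
  by (induction I rule: infinite_finite_induct) (simp_all add: cpoly_add)

lemma cpoly_monom: "cpoly (monom c n) = monom (of_real c) n"
  by (simp add: map_poly_monom)

lemma cheb_eval:
  assumes "z \<noteq> 0"
  shows "poly (cpoly (cheb_T k)) ((z + inverse z) / 2) = (z ^ k + inverse z ^ k) / 2"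
proof (induction k rule: cheb_T.induct)
  case 1 then show ?case by simp
next
  case 2 then show ?case by (simp add: map_poly_pCons)
next
  case (3 k)
  have e: "cpoly [:0, 2:] = [:0, 2:]" by (simp add: map_poly_pCons)
  have "poly (cpoly (cheb_T (Suc (Suc k)))) ((z + inverse z) / 2)
     = (z + inverse z) * poly (cpoly (cheb_T (Suc k))) ((z + inverse z) / 2)
       - poly (cpoly (cheb_T k)) ((z + inverse z) / 2)"
  proof -
    have "cpoly (cheb_T (Suc (Suc k))) = [:0, 2:] * cpoly (cheb_T (Suc k)) - cpoly (cheb_T k)"
      by (simp only: cheb_T.simps cpoly_diff cpoly_mult e)
    then show ?thesis by simp
  qed
  also have "\<dots> = (z + inverse z) * ((z ^ Suc k + inverse z ^ Suc k) / 2) - (z ^ k + inverse z ^ k) / 2"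
    by (simp only: 3)
  also have "\<dots> = (z ^ Suc (Suc k) + inverse z ^ Suc (Suc k)) / 2"
    using assms by (simp add: field_simps)
  finally show ?case .
qed

lemma TnA_eval:
  assumes "z \<noteq> 0"
  shows "poly (cpoly (T_nA n m a)) ((z + inverse z) / 2) =
     (\<Sum>i\<le>m. of_real (a i) * ((z ^ (n - i) + inverse z ^ (n - i)) / 2))"
  by (simp add: T_nA_def cpoly_sum cpoly_smult poly_sum cheb_eval[OF assms])

lemma PA_eval: "poly (cpoly (P_A m a)) z = (\<Sum>i\<le>m. of_real (a i) * z ^ (m - i))"
  by (simp add: P_A_def cpoly_sum cpoly_monom poly_sum poly_monom)

lemma PA_coeff: "coeff (P_A m a) m = a 0"
proof -
  have "coeff (P_A m a) m = (\<Sum>i\<le>m. if m - i = m then a i else 0)"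
    by (simp add: P_A_def coeff_sum coeff_monom)
  also have "\<dots> = (\<Sum>i\<in>{0}. a i)"
    by (rule sum.mono_neutral_cong_right) auto
  finally show ?thesis by simp
qed



lemma no_log_id_circle:
  "\<not> (\<exists>g. continuous_on (sphere (0::complex) 1) g \<and> (\<forall>w\<in>sphere 0 1. w = exp (g w)))"
proof
  assume "\<exists>g. continuous_on (sphere (0::complex) 1) g \<and> (\<forall>w\<in>sphere 0 1. w = exp (g w))"
  then obtain g where cg: "continuous_on (sphere (0::complex) 1) g" and g: "\<And>w. w \<in> sphere 0 1 \<Longrightarrow> w = exp (g w)"
    by blast
  have re: "Re (g w) = 0" if "w \<in> sphere 0 1" for w
  proof -
    have "norm (exp (g w)) = 1" using g[OF that] that by simp
    then show ?thesis by (simp add: norm_exp_eq_Re)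
  qed
  have "\<exists>h. continuous_on (sphere (0::complex) 1) h \<and> (\<forall>w\<in>sphere 0 1. id w = exp (\<i> * of_real (h w)))"
  proof (intro exI conjI ballI)
    show "continuous_on (sphere (0::complex) 1) (Im \<circ> g)" by (intro continuous_intros cg)
    fix w :: complex assume w: "w \<in> sphere 0 1"
    have "g w = \<i> * of_real (Im (g w))" using re[OF w] by (simp add: complex_eq_iff)
    then show "id w = exp (\<i> * of_real ((Im \<circ> g) w))" using g[OF w] by simp
  qed
  then obtain c where "homotopic_with_canon (\<lambda>h. True) (sphere (0::complex) 1) (sphere 0 1) id (\<lambda>x. c)"
    using inessential_eq_continuous_logarithm_circle by blast
  then have "contractible (sphere (0::complex) 1)"
    unfolding contractible_def by blast
  then show False using contractible_sphere[of "0::complex" 1] by simp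
qed

lemma no_log_power_circle:
  assumes "k \<ge> 1"
  shows "\<not> (\<exists>g. continuous_on (sphere (0::complex) 1) g \<and> (\<forall>w\<in>sphere 0 1. w ^ k = exp (g w)))"
proof
  assume "\<exists>g. continuous_on (sphere (0::complex) 1) g \<and> (\<forall>w\<in>sphere 0 1. w ^ k = exp (g w))"
  then obtain g where cg: "continuous_on (sphere (0::complex) 1) g" and g: "\<And>w. w \<in> sphere 0 1 \<Longrightarrow> w ^ k = exp (g w)"
    by blast
  define u where "u w = w * exp (- g w / of_nat k)" for w
  have cu: "continuous_on (sphere (0::complex) 1) u"
    unfolding u_def using assms by (intro continuous_intros cg) auto
  have uk: "u w ^ k = 1" if "w \<in> sphere 0 1" for w
  proof -
    have "u w ^ k = w ^ k * exp (- g w / of_nat k) ^ k" by (simp add: u_def power_mult_distrib)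
    also have "exp (- g w / of_nat k) ^ k = exp (of_nat k * (- g w / of_nat k))"
      by (rule exp_of_nat_mult[symmetric])
    also have "of_nat k * (- g w / of_nat k) = - g w" using assms by simp
    finally show ?thesis using g[OF that] by (simp add: exp_minus)
  qed
  have fin: "finite {x::complex. x ^ k = 1}"
  proof -
    have "{x::complex. x ^ k = 1} = {x. poly (monom 1 k - 1) x = 0}"
      by (simp add: poly_monom)
    moreover have "monom (1::complex) k - 1 \<noteq> 0"
    proof
      assume "monom (1::complex) k - 1 = 0"
      then have "coeff (monom (1::complex) k - 1) k = 0" by simp
      then show False using assms by (simp add: coeff_monom)
    qed
    ultimately show ?thesis using poly_roots_finite by metis
  qed
  have "connected (u ` sphere 0 1)"
    by (intro connected_continuous_image cu connected_sphere) (simp add: DIM_complex)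
  moreover have "finite (u ` sphere 0 1)"
    by (rule finite_subset[OF _ fin]) (auto simp: uk)
  moreover have "u ` sphere 0 1 \<noteq> {}" by (metis empty_iff image_is_empty norm_one mem_sphere_0)
  ultimately obtain c where c: "u ` sphere 0 1 = {c}"
    using connected_finite_iff_sing by metis
  have "c ^ k = 1" using c uk by (metis imageE insertI1 norm_one mem_sphere_0)
  then have c0: "c \<noteq> 0" using assms by (metis power_0_left zero_neq_one not_one_le_zero le0 neq0_conv)
  have "\<exists>h. continuous_on (sphere (0::complex) 1) h \<and> (\<forall>w\<in>sphere 0 1. w = exp (h w))"
  proof (intro exI conjI ballI)
    show "continuous_on (sphere (0::complex) 1) (\<lambda>w. Ln c + g w / of_nat k)"
      using assms by (intro continuous_intros cg) auto
    fix w :: complex assume w: "w \<in> sphere 0 1"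
    have "u w = c" using c w by blast
    then have "c = w * exp (- g w / of_nat k)" by (simp add: u_def)
    then have "w = c * exp (g w / of_nat k)"
      by (simp add: exp_minus field_simps)
    also have "\<dots> = exp (Ln c + g w / of_nat k)" using c0 by (simp add: exp_add)
    finally show "w = exp (Ln c + g w / of_nat k)" .
  qed
  then show False using no_log_id_circle by blast
qed

lemma no_log_power_sphere:
  assumes "k \<ge> 1" "r > 0"
  shows "\<not> (\<exists>g. continuous_on (sphere (c::complex) r) g \<and> (\<forall>z\<in>sphere c r. (z - c) ^ k = exp (g z)))"
proof
  assume "\<exists>g. continuous_on (sphere (c::complex) r) g \<and> (\<forall>z\<in>sphere c r. (z - c) ^ k = exp (g z))"
  then obtain g where cg: "continuous_on (sphere c r) g" and g: "\<And>z. z \<in> sphere c r \<Longrightarrow> (z - c) ^ k = exp (g z)"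
    by blast
  have img: "(\<lambda>w. c + of_real r * w) ` sphere 0 1 \<subseteq> sphere c r"
    using assms by (auto simp: dist_norm norm_mult)
  have "\<exists>h. continuous_on (sphere (0::complex) 1) h \<and> (\<forall>w\<in>sphere 0 1. w ^ k = exp (h w))"
  proof (intro exI conjI ballI)
    show "continuous_on (sphere (0::complex) 1) (\<lambda>w. g (c + of_real r * w) - of_nat k * of_real (ln r))"
      by (intro continuous_intros continuous_on_compose2[OF cg _ img])
    fix w :: complex assume w: "w \<in> sphere 0 1"
    have "(of_real r * w) ^ k = exp (g (c + of_real r * w))"
    proof -
      have "c + of_real r * w \<in> sphere c r" using img w by blast
      from g[OF this] show ?thesis by simp
    qed
    moreover have "exp (of_nat k * complex_of_real (ln r)) = of_real r ^ k"
    proof -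
      have "exp (complex_of_real (ln r)) = of_real r" using assms by (metis exp_ln exp_of_real)
      then show ?thesis by (simp add: exp_of_nat_mult)
    qed
    ultimately show "w ^ k = exp (g (c + of_real r * w) - of_nat k * of_real (ln r))"
      using assms by (simp add: exp_diff power_mult_distrib field_simps)
  qed
  then show False using no_log_power_circle[OF assms(1)] by blast
qed

lemma mini_rouche:
  fixes c :: complex
  assumes r: "r > 0" and k: "k \<ge> 1"
    and cR: "continuous_on (cball c r) R" and R0: "\<And>z. z \<in> cball c r \<Longrightarrow> R z \<noteq> 0"
    and cg: "continuous_on (cball c r) g"
    and lt: "\<And>z. z \<in> sphere c r \<Longrightarrow> norm (g z) < norm ((z - c) ^ k * R z)"
  shows "\<exists>z\<in>cball c r. (z - c) ^ k * R z + g z = 0"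
proof (rule ccontr)
  assume H: "\<not> ?thesis"
  define F where "F z = (z - c) ^ k * R z + g z" for z
  have cF: "continuous_on (cball c r) F" unfolding F_def by (intro continuous_intros cR cg)
  obtain L where cL: "continuous_on (cball c r) L" and L: "\<And>z. z \<in> cball c r \<Longrightarrow> F z = exp (L z)"
    using continuous_logarithm_on_cball[OF cF] H F_def by metis
  obtain LR where cLR: "continuous_on (cball c r) LR" and LR: "\<And>z. z \<in> cball c r \<Longrightarrow> R z = exp (LR z)"
    using continuous_logarithm_on_cball[OF cR] R0 by metis
  have sub: "sphere c r \<subseteq> cball c r" by auto
  define f where "f z = (z - c) ^ k * R z" for z
  have f0: "f z \<noteq> 0" if "z \<in> sphere c r" for z
    using lt[OF that] unfolding f_def by (metis norm_ge_zero norm_zero not_less)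
  define \<eta> where "\<eta> z = g z / f z" for z
  have c\<eta>: "continuous_on (sphere c r) \<eta>"
    unfolding \<eta>_def f_def
    by (intro continuous_intros continuous_on_subset[OF cR sub] continuous_on_subset[OF cg sub])
       (use f0 f_def in auto)
  have \<eta>1: "norm (\<eta> z) < 1" if "z \<in> sphere c r" for z
    using lt[OF that] f0[OF that] unfolding \<eta>_def f_def by (simp add: norm_divide divide_less_eq)
  have nonpos: "1 + \<eta> z \<notin> \<real>\<^sub>\<le>\<^sub>0" if "z \<in> sphere c r" for z
  proof
    assume "1 + \<eta> z \<in> \<real>\<^sub>\<le>\<^sub>0"
    then have "Re (1 + \<eta> z) \<le> 0" by (metis Re_complex_of_real nonpos_Reals_cases)
    moreover have "\<bar>Re (\<eta> z)\<bar> < 1" using abs_Re_le_cmod[of "\<eta> z"] \<eta>1[OF that] by linarith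
    ultimately show False by simp
  qed
  have "\<exists>G. continuous_on (sphere c r) G \<and> (\<forall>z\<in>sphere c r. (z - c) ^ k = exp (G z))"
  proof (intro exI conjI ballI)
    show "continuous_on (sphere c r) (\<lambda>z. L z - LR z - Ln (1 + \<eta> z))"
      by (intro continuous_intros continuous_on_subset[OF cL sub] continuous_on_subset[OF cLR sub] c\<eta>)
         (use nonpos in auto)
    fix z assume z: "z \<in> sphere c r"
    have ne: "1 + \<eta> z \<noteq> 0" using nonpos[OF z] by auto
    have Rz: "R z \<noteq> 0" using R0 z by auto
    have "F z = f z * (1 + \<eta> z)" using f0[OF z] by (simp add: F_def f_def \<eta>_def field_simps)
    then have "exp (L z - LR z - Ln (1 + \<eta> z)) = f z * (1 + \<eta> z) / R z / (1 + \<eta> z)"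
      using L[of z] LR[of z] z ne by (auto simp: exp_diff)
    also have "\<dots> = (z - c) ^ k" using ne Rz by (simp add: f_def)
    finally show "(z - c) ^ k = exp (L z - LR z - Ln (1 + \<eta> z))" by simp
  qed
  then show False using no_log_power_sphere[OF k r] by blast
qed


lemma key_identity:
  fixes z :: complex
  assumes z: "z \<noteq> 0" and nm: "m \<le> n"
  shows "(\<Sum>i\<le>m. of_real (a i) * ((z ^ (n - i) + inverse z ^ (n - i)) / 2)) =
     z ^ (n - m) * ((\<Sum>i\<le>m. of_real (a i) * z ^ (m - i)) + (\<Sum>i\<le>m. of_real (a i) * z ^ i) * inverse z ^ (2 * n - m)) / 2"
proof -
  have t: "of_real (a i) * ((z ^ (n - i) + inverse z ^ (n - i)) / 2) =
     z ^ (n - m) * (of_real (a i) * z ^ (m - i) + of_real (a i) * z ^ i * inverse z ^ (2 * n - m)) / 2"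
    if i: "i \<le> m" for i
  proof -
    have 1: "z ^ (n - m) * z ^ (m - i) = z ^ (n - i)"
      using i nm by (simp flip: power_add)
    have e: "2 * n - m = (n - m + i) + (n - i)" using i nm by simp
    have e1: "inverse z ^ (2 * n - m) = inverse z ^ (n - m + i) * inverse z ^ (n - i)"
      by (simp only: e power_add)
    have e2: "z ^ (n - m) * z ^ i = z ^ (n - m + i)" by (simp add: power_add)
    have e3: "z ^ (n - m + i) * inverse z ^ (n - m + i) = 1"
      using z by (simp flip: power_mult_distrib)
    have 2: "z ^ (n - m) * z ^ i * inverse z ^ (2 * n - m) = inverse z ^ (n - i)"
      by (simp only: e1 e2 mult.assoc[symmetric] e3 mult_1_left)
    show ?thesis
      unfolding 1[symmetric] 2[symmetric] by (simp add: algebra_simps)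
  qed
  have "z ^ (n - m) * ((\<Sum>i\<le>m. of_real (a i) * z ^ (m - i)) + (\<Sum>i\<le>m. of_real (a i) * z ^ i) * inverse z ^ (2 * n - m)) / 2
     = (\<Sum>i\<le>m. z ^ (n - m) * (of_real (a i) * z ^ (m - i) + of_real (a i) * z ^ i * inverse z ^ (2 * n - m)) / 2)"
    by (simp only: sum_distrib_right sum.distrib[symmetric] sum_distrib_left sum_divide_distrib)
  moreover have "(\<Sum>i\<le>m. of_real (a i) * ((z ^ (n - i) + inverse z ^ (n - i)) / 2)) =
     (\<Sum>i\<le>m. z ^ (n - m) * (of_real (a i) * z ^ (m - i) + of_real (a i) * z ^ i * inverse z ^ (2 * n - m)) / 2)"
    by (rule sum.cong[OF refl], rule t, simp)
  ultimately show ?thesis by simp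
qed

theorem theorem2p4:
  fixes m :: nat and a :: "nat \<Rightarrow> real" and \<omega> :: complex
  assumes "m \<ge> 1" and "a 0 \<noteq> 0" and "a m \<noteq> 0"
    and "poly (map_poly complex_of_real (P_A m a)) \<omega> = 0"
    and "norm \<omega> > 1"
  shows "\<forall>\<epsilon>>0. \<exists>n0::nat. \<forall>n>n0. n \<ge> m \<longrightarrow>
           (\<exists>\<xi>::complex. poly (map_poly complex_of_real (T_nA n m a)) \<xi> = 0 \<and>
                  norm (\<xi> - (\<omega> + inverse \<omega>) / 2) < \<epsilon>)"
proof (intro allI impI)
  fix \<epsilon> :: real assume \<epsilon>: "\<epsilon> > 0"
  define pc where "pc = cpoly (P_A m a)"
  define Q where "Q z = (\<Sum>i\<le>m. of_real (a i) * z ^ i)" for z :: complex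
  have \<omega>0: "\<omega> \<noteq> 0" using assms(5) by auto
  have pc0: "pc \<noteq> 0"
  proof
    assume "pc = 0"
    then have "coeff pc m = 0" by simp
    then show False using assms(2) by (simp add: pc_def coeff_map_poly PA_coeff)
  qed
  define k where "k = order \<omega> pc"
  have k: "k \<ge> 1" using order_root[of pc \<omega>] assms(4) pc0 by (simp add: pc_def k_def)
  obtain q where q: "pc = [:-\<omega>, 1:] ^ k * q" and qd: "\<not> [:-\<omega>, 1:] dvd q"
    using order_decomp[OF pc0] k_def by blast
  have q\<omega>: "poly q \<omega> \<noteq> 0" using qd poly_eq_0_iff_dvd by blast
  have Peq: "poly pc z = (z - \<omega>) ^ k * poly q z" for z
    by (simp add: q poly_power)
  obtain d1 where d1: "d1 > 0" "\<And>y. dist \<omega> y < d1 \<Longrightarrow> poly q y \<noteq> 0"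
    using continuous_at_avoid[of \<omega> "poly q" 0, OF poly_isCont q\<omega>] by blast
  have ic: "isCont (\<lambda>z. (z + inverse z) / 2) \<omega>" using \<omega>0 by (intro continuous_intros) auto
  have lim: "(\<lambda>z. (z + inverse z) / 2) \<midarrow>\<omega>\<rightarrow> (\<omega> + inverse \<omega>) / 2"
    using ic by (simp add: isCont_def)
  obtain d2 where d2: "d2 > 0"
      "\<forall>z. z \<noteq> \<omega> \<and> norm (z - \<omega>) < d2 \<longrightarrow> norm ((z + inverse z) / 2 - (\<omega> + inverse \<omega>) / 2) < \<epsilon>"
    using LIM_D[OF lim \<epsilon>] by blast
  define \<delta> where "\<delta> = min (min d1 d2) (norm \<omega> - 1) / 2"
  have \<delta>: "\<delta> > 0" "\<delta> < d1" "\<delta> < d2" "\<delta> \<le> (norm \<omega> - 1) / 2"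
    using d1 d2 assms(5) by (auto simp: \<delta>_def)
  define r0 where "r0 = norm \<omega> - \<delta>"
  have r0: "r0 > 1" using \<delta> by (simp add: r0_def)
  have zr0: "norm z \<ge> r0" if "z \<in> cball \<omega> \<delta>" for z
    using that norm_triangle_ineq2[of \<omega> z] by (auto simp: r0_def dist_norm norm_minus_commute)
  have z0: "z \<noteq> 0" if "z \<in> cball \<omega> \<delta>" for z using zr0[OF that] r0 by auto
  have qnz: "poly q z \<noteq> 0" if "z \<in> cball \<omega> \<delta>" for z
    using that \<delta> d1 by auto
  have cne: "cball \<omega> \<delta> \<noteq> {}" using \<delta> by auto
  have cq: "continuous_on (cball \<omega> \<delta>) (\<lambda>z. poly q z)" by (intro continuous_intros)
  have cnq: "continuous_on (cball \<omega> \<delta>) (\<lambda>z. norm (poly q z))" by (intro continuous_intros)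
  obtain z0' where z0': "z0' \<in> cball \<omega> \<delta>" "\<And>y. y \<in> cball \<omega> \<delta> \<Longrightarrow> norm (poly q z0') \<le> norm (poly q y)"
    using continuous_attains_inf[OF compact_cball cne cnq] by blast
  define \<mu> where "\<mu> = norm (poly q z0')"
  have \<mu>: "\<mu> > 0" using qnz[OF z0'(1)] by (simp add: \<mu>_def)
  have cQ: "continuous_on (cball \<omega> \<delta>) Q" unfolding Q_def by (intro continuous_intros)
  have cnQ: "continuous_on (cball \<omega> \<delta>) (\<lambda>z. norm (Q z))" by (intro continuous_intros cQ)
  obtain z1 where z1: "z1 \<in> cball \<omega> \<delta>" "\<And>y. y \<in> cball \<omega> \<delta> \<Longrightarrow> norm (Q y) \<le> norm (Q z1)"
    using continuous_attains_sup[OF compact_cball cne cnQ] by blast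
  define B where "B = norm (Q z1)"
  have B: "B \<ge> 0" by (simp add: B_def)
  obtain N where N: "B / (\<delta> ^ k * \<mu>) < r0 ^ N"
    using real_arch_pow[OF r0] by blast
  show "\<exists>n0::nat. \<forall>n>n0. n \<ge> m \<longrightarrow>
           (\<exists>\<xi>::complex. poly (map_poly complex_of_real (T_nA n m a)) \<xi> = 0 \<and>
                  norm (\<xi> - (\<omega> + inverse \<omega>) / 2) < \<epsilon>)"
  proof (rule exI[of _ "N + m"], intro allI impI)
    fix n assume n: "n > N + m" and nm: "n \<ge> m"
    define M where "M = 2 * n - m"
    have MN: "M \<ge> N" using n by (simp add: M_def)
    define g where "g z = Q z * inverse z ^ M" for z
    have cg: "continuous_on (cball \<omega> \<delta>) g"
      unfolding g_def using z0 by (intro continuous_intros cQ) auto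
    have lt: "norm (g z) < norm ((z - \<omega>) ^ k * poly q z)" if z: "z \<in> sphere \<omega> \<delta>" for z
    proof -
      have zc: "z \<in> cball \<omega> \<delta>" using z by auto
      have "norm (g z) = norm (Q z) / norm z ^ M"
        by (simp add: g_def norm_mult norm_power norm_inverse divide_inverse power_inverse)
      also have "\<dots> \<le> B / r0 ^ M"
      proof (rule frac_le)
        show "norm (Q z) \<le> B" using z1(2)[OF zc] by (simp add: B_def)
        show "0 < r0 ^ M" using r0 by simp
        show "r0 ^ M \<le> norm z ^ M" using zr0[OF zc] r0 by (intro power_mono) auto
      qed (rule B)
      also have "\<dots> \<le> B / r0 ^ N"
        using r0 MN B by (intro divide_left_mono power_increasing) auto
      also have "\<dots> < \<delta> ^ k * \<mu>"
        using N \<delta>(1) \<mu> r0 by (simp add: divide_less_eq mult.commute)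
      also have "\<dots> \<le> norm ((z - \<omega>) ^ k * poly q z)"
      proof -
        have "norm (z - \<omega>) = \<delta>" using z by (simp add: dist_norm norm_minus_commute)
        then show ?thesis using z0'(2)[OF zc] \<delta>(1)
          by (simp add: norm_mult norm_power \<mu>_def)
      qed
      finally show ?thesis .
    qed
    obtain z where z: "z \<in> cball \<omega> \<delta>" and zz: "(z - \<omega>) ^ k * poly q z + g z = 0"
      using mini_rouche[OF \<delta>(1) k cq qnz cg lt] by blast
    have znz: "z \<noteq> 0" using z0[OF z] .
    have Pz: "poly pc z + Q z * inverse z ^ (2 * n - m) = 0"
      using zz by (simp add: Peq g_def M_def)
    show "\<exists>\<xi>::complex. poly (map_poly complex_of_real (T_nA n m a)) \<xi> = 0 \<and>
                  norm (\<xi> - (\<omega> + inverse \<omega>) / 2) < \<epsilon>"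
    proof (rule exI[of _ "(z + inverse z) / 2"], rule conjI)
      have "poly (map_poly complex_of_real (T_nA n m a)) ((z + inverse z) / 2) =
          z ^ (n - m) * (poly pc z + Q z * inverse z ^ (2 * n - m)) / 2"
        by (simp only: TnA_eval[OF znz] key_identity[OF znz nm] pc_def PA_eval Q_def)
      then show "poly (map_poly complex_of_real (T_nA n m a)) ((z + inverse z) / 2) = 0"
        using Pz by simp
      show "norm ((z + inverse z) / 2 - (\<omega> + inverse \<omega>) / 2) < \<epsilon>"
      proof (cases "z = \<omega>")
        case True then show ?thesis using \<epsilon> by simp
      next
        case False
        have "norm (z - \<omega>) < d2" using z \<delta> by (simp add: dist_norm norm_minus_commute)
        then show ?thesis using d2(2) False by auto
      qed
    qed
  qed
qed

end
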